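(* Let $G$ be a Polish group and let $H\colon G \to [0,\infty]$ be a graded subgroup. Then the following are equivalent: (1) $\inf_{x \in G} H^\circ(x) = 0$; (2) $H$ is continuous; (3) $H$ is upper semi-continuous.
   Context: A graded subgroup of $G$ is a function $H\colon G \to [0,\infty]$ such that $H(1_G) = 0$, $H(x) = H(x^{-1})$ for all $x$, and $H(hg) \leq H(h) + H(g)$ for all $g,h \in G$. The interior $H^\circ$ is the function $H^\circ(x) = \limsup_{y \to x} H(y)$. Here $[0,\infty]$ carries the order topology. *)

theory Defs
  imports "HOL-Analysis.Analysis" "HOL-Library.Extended_Nonnegative_Real"
begin

text \<open>Groups are written additively (class group_add is not assumed commutative):
  the paper's product h g corresponds to h + g, the identity to 0, inverses to uminus.\<close>

definition graded_subgroup :: "('a::group_add \<Rightarrow> ennreal) \<Rightarrow> bool" where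
  "graded_subgroup H \<longleftrightarrow>
     H 0 = 0 \<and> (\<forall>x. H x = H (- x)) \<and> (\<forall>g h. H (h + g) \<le> H h + H g)"

definition graded_interior :: "('a::topological_space \<Rightarrow> ennreal) \<Rightarrow> 'a \<Rightarrow> ennreal" where
  "graded_interior H x = Limsup (nhds x) H"

definition upper_semicontinuous :: "('a::topological_space \<Rightarrow> 'b::linorder) \<Rightarrow> bool" where
  "upper_semicontinuous H \<longleftrightarrow> (\<forall>r. open {x. H x < r})"

end

theory Submission
  imports Defs
begin

lemma ennreal_half_exists:
  fixes u :: ennreal assumes "0 < u" shows "\<exists>e>0. e + e < u"
proof (cases "u = \<infinity>")
  case True then show ?thesis by (intro exI[of _ 1]) auto
next
  case False
  then obtain r where r: "u = ennreal r" "r > 0" using assms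
    by (metis ennreal_cases ennreal_less_zero_iff infinity_ennreal_def)
  show ?thesis
    by (intro exI[of _ "ennreal (r/3)"]) (use r in \<open>auto simp: ennreal_plus[symmetric] ennreal_less_iff simp del: ennreal_plus\<close>)
qed

theorem lemma3p9:
  fixes H :: "'a::{polish_space, topological_group_add} \<Rightarrow> ennreal"
  assumes "graded_subgroup H"
  shows "((INF x. graded_interior H x) = 0 \<longleftrightarrow> continuous_on UNIV H)
       \<and> (continuous_on UNIV H \<longleftrightarrow> upper_semicontinuous H)"
proof -
  have H0: "H 0 = 0" and Hs: "\<And>x. H x = H (- x)" and Ha: "\<And>g h. H (h + g) \<le> H h + H g"
    using assms unfolding graded_subgroup_def by auto
  let ?T = "(H \<longlongrightarrow> 0) (nhds 0)"
  have Tb: "continuous_on UNIV H" if T: ?T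
  proof (rule continuous_at_imp_continuous_on, intro ballI)
    fix x :: 'a
    have g: "((\<lambda>y. H (- x + y)) \<longlongrightarrow> 0) (nhds x)"
    proof (rule filterlim_compose[OF T])
      have "((\<lambda>y. - x + y) \<longlongrightarrow> - x + x) (nhds x)"
        by (intro tendsto_intros filterlim_ident)
      then show "filterlim (\<lambda>y. - x + y) (nhds 0) (nhds x)" by simp
    qed
    have up: "H y \<le> H x + H (- x + y)" for y
      using Ha[of x "- x + y"] by simp
    have lo: "H x \<le> H y + H (- x + y)" for y
    proof -
      have "H x \<le> H y + H (- y + x)" using Ha[of y "- y + x"] by simp
      moreover have "H (- y + x) = H (- x + y)" using Hs[of "- y + x"] by (simp add: minus_add)
      ultimately show ?thesis by simp
    qed
    have "(H \<longlongrightarrow> H x) (nhds x)"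
    proof (rule order_tendstoI)
      fix l assume l: "l < H x"
      have "((\<lambda>y. l + H (- x + y)) \<longlongrightarrow> l + 0) (nhds x)"
        by (intro tendsto_intros g)
      then have "eventually (\<lambda>y. l + H (- x + y) < H x) (nhds x)"
        using l by (simp add: order_tendstoD(2))
      then show "eventually (\<lambda>y. l < H y) (nhds x)"
      proof (rule eventually_mono)
        fix y assume a: "l + H (- x + y) < H x"
        show "l < H y"
        proof (rule ccontr)
          assume "\<not> l < H y"
          then have "H y + H (- x + y) \<le> l + H (- x + y)" by (intro add_right_mono) simp
          with lo[of y] have "H x \<le> l + H (- x + y)" by (rule order_trans)
          with a show False by simp
        qed
      qed
    next
      fix u assume u: "H x < u"
      have "((\<lambda>y. H x + H (- x + y)) \<longlongrightarrow> H x + 0) (nhds x)"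
        by (intro tendsto_intros g)
      then have "eventually (\<lambda>y. H x + H (- x + y) < u) (nhds x)"
        using u by (simp add: order_tendstoD(2))
      then show "eventually (\<lambda>y. H y < u) (nhds x)"
        by (rule eventually_mono) (rule le_less_trans[OF up])
    qed
    then show "isCont H x" using tendsto_at_iff_tendsto_nhds isCont_def by blast
  qed
  have bT: ?T if b: "continuous_on UNIV H"
  proof -
    have "isCont H 0" using b continuous_on_eq_continuous_at by blast
    then show ?thesis using tendsto_at_iff_tendsto_nhds isCont_def H0 by metis
  qed
  have bc: "upper_semicontinuous H" if b: "continuous_on UNIV H"
    unfolding upper_semicontinuous_def
  proof
    fix r
    have "\<forall>B. open B \<longrightarrow> open (H -` B \<inter> UNIV)"
      using continuous_on_open_vimage[OF open_UNIV, of H] b by (rule iffD1)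
    then have "open (H -` {..<r} \<inter> UNIV)" using open_lessThan by blast
    moreover have "{x. H x < r} = H -` {..<r} \<inter> UNIV" by auto
    ultimately show "open {x. H x < r}" by simp
  qed
  have cT: ?T if c: "upper_semicontinuous H"
  proof (rule order_tendstoI)
    fix l :: ennreal assume "l < 0" then show "eventually (\<lambda>y. l < H y) (nhds 0)" by simp
  next
    fix u :: ennreal assume u: "0 < u"
    have "open {x. H x < u}" using c unfolding upper_semicontinuous_def by blast
    moreover have "(0::'a) \<in> {x. H x < u}" using H0 u by simp
    ultimately show "eventually (\<lambda>y. H y < u) (nhds 0)"
      unfolding eventually_nhds by blast
  qed
  have Td: "(INF x. graded_interior H x) = 0" if T: ?T
  proof -
    have "graded_interior H 0 = 0"
      unfolding graded_interior_def by (rule lim_imp_Limsup) (auto intro: T)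
    then have "(INF x. graded_interior H x) \<le> 0" by (metis INF_lower UNIV_I)
    then show ?thesis by simp
  qed
  have dT: ?T if d: "(INF x. graded_interior H x) = 0"
  proof (rule order_tendstoI)
    fix l :: ennreal assume "l < 0" then show "eventually (\<lambda>y. l < H y) (nhds 0)" by simp
  next
    fix u :: ennreal assume u: "0 < u"
    obtain e where e: "e > 0" "e + e < u" using ennreal_half_exists[OF u] by blast
    have "(INF x. graded_interior H x) < e" using d e(1) by simp
    then obtain x where "graded_interior H x < e" unfolding INF_less_iff by blast
    then obtain P where P: "eventually P (nhds x)" "(SUP y\<in>{y. P y}. H y) < e"
      unfolding graded_interior_def Limsup_def by (auto simp: INF_less_iff)
    have Pb: "H y < e" if "P y" for y
      using P(2) that SUP_upper[of y "{y. P y}" H] by simp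
    have xe: "H x < e" using Pb P(1) unfolding eventually_nhds by blast
    have "((\<lambda>z. x + z) \<longlongrightarrow> x + 0) (nhds 0)"
      by (intro tendsto_intros filterlim_ident)
    then have "eventually (\<lambda>z. P (x + z)) (nhds 0)"
      using P(1) by (simp add: filterlim_iff)
    then show "eventually (\<lambda>y. H y < u) (nhds 0)"
    proof (rule eventually_mono)
      fix z assume "P (x + z)"
      then have "H (x + z) < e" by (rule Pb)
      have "H z = H (- x + (x + z))" by (simp add: add.assoc[symmetric])
      also have "\<dots> \<le> H (- x) + H (x + z)" by (rule Ha)
      also have "\<dots> = H x + H (x + z)" using Hs[of x] by simp
      also have "\<dots> < e + e" using xe \<open>H (x + z) < e\<close>
        by (rule add_strict_mono)
      finally show "H z < u" using e(2) by simp
    qed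
  qed
  show ?thesis using Tb bT bc cT Td dT by blast
qed

end
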